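(* Let $d$ and $k$ be positive integers with $k\le d$, and let $C_m=\frac{1}{m+1}\binom{2m}{m}$ denote the $m$-th Catalan number. Then $$\sum_{\mathcal P}C_{a_1-1}C_{a_2-1}\cdots C_{a_k-1}=\binom{2d-k-1}{d-1},$$ where the sum is over all cyclic compositions $\mathcal P$ of $d$ into $k$ parts and $a_1,\dots,a_k$ are the sizes of the parts of $\mathcal P$.
   Context: For $d\ge1$ consider the cycle graph with vertex set $\mathbb Z_d$ and the $d$ edges $\{i,i+1\}$, $i\in\mathbb Z_d$ (a loop if $d=1$, two parallel edges if $d=2$). A cyclic composition of $d$ into $k$ parts ($1\le k\le d$) is a choice of a $k$-element subset of the $d$ edges of the cycle to delete; its parts are the $k$ connected components (each a path) of the remaining graph, and the size of a part is its number of vertices. There are $\binom dk$ cyclic compositions of $d$ into $k$ parts. *)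

theory Defs
  imports Complex_Main
begin

definition catalan :: "nat \<Rightarrow> real" where
  "catalan m = real ((2*m) choose m) / real (m + 1)"

text \<open>Cycle graph on Z_d with edges e_i = {i, i+1 mod d}, i in {0..<d}.
  A cyclic composition of d into k parts is a k-subset S of the edge indices {0..<d}.
  Removing the edges in S, each deleted edge s is followed (going around the cycle)
  by exactly one part: the path of vertices s+1, s+2, ..., t (mod d), where t is the
  next deleted edge index cyclically after s (t = s if S = {s}).  Its number of
  vertices is the cyclic gap from s to t, in {1..d}.  The map s \<mapsto> (part after s) is a
  bijection from S onto the parts.\<close>
definition cyc_gap :: "nat \<Rightarrow> nat set \<Rightarrow> nat \<Rightarrow> nat" where
  "cyc_gap d S s = (LEAST j. 0 < j \<and> (s + j) mod d \<in> S)"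

definition cyclic_compositions :: "nat \<Rightarrow> nat \<Rightarrow> nat set set" where
  "cyclic_compositions d k = {S. S \<subseteq> {0..<d} \<and> card S = k}"

definition part_sizes :: "nat \<Rightarrow> nat set \<Rightarrow> nat list" where
  "part_sizes d S = map (cyc_gap d S) (sorted_list_of_set S)"

end

theory Submission
  imports Defs "HOL-Computational_Algebra.Formal_Power_Series"
begin


lemma gch_Suc: "(a::real) gchoose Suc k = (a gchoose k) * (a - of_nat k) / of_nat (Suc k)"
proof -
  have "fact (Suc k) * (a gchoose Suc k) = (\<Prod>i = 0..<Suc k. a - of_nat i)"
    by (rule gbinomial_mult_fact)
  also have "\<dots> = (\<Prod>i = 0..<k. a - of_nat i) * (a - of_nat k)" by simp
  also have "\<dots> = fact k * (a gchoose k) * (a - of_nat k)" by (simp add: gbinomial_mult_fact)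
  finally have "fact (Suc k) * (a gchoose Suc k) = fact k * (a gchoose k) * (a - of_nat k)" .
  then have "fact k * (real (Suc k) * (a gchoose Suc k)) = fact k * ((a gchoose k) * (a - of_nat k))"
    by (simp only: fact_Suc of_nat_mult mult_ac)
  then have "real (Suc k) * (a gchoose Suc k) = (a gchoose k) * (a - of_nat k)" by simp
  then show ?thesis by (simp add: field_simps del: of_nat_Suc)
qed

lemma catalan_Suc: "catalan (Suc m) = catalan m * (4 * real m + 2) / (real m + 2)"
proof -
  have e1: "catalan (Suc m) = real ((2*m+2) choose (m+1)) / real (m+2)"
    unfolding catalan_def by (simp only: mult_Suc_right add_2_eq_Suc' Suc_eq_plus1 add.assoc) simp
  have "real ((2*m+2) choose (m+1)) = fact (2*m+2) / (fact (m+1) * fact (2*m+2-(m+1)))"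
    by (rule binomial_fact) simp
  also have "2*m+2-(m+1) = m+1" by simp
  also have "fact (2*m+2) = (real (2*m+2) * real (2*m+1)) * (fact (2*m) :: real)"
    by (simp add: fact_Suc)
  also have "fact (m+1) = real (m+1) * (fact m :: real)" by simp
  finally have e2: "real ((2*m+2) choose (m+1)) = (real (2*m+2) * real (2*m+1)) * fact (2*m) / (real (m+1) * fact m * (real (m+1) * fact m))" .
  have e3: "real ((2*m) choose m) = fact (2*m) / (fact m * fact (2*m - m))"
    by (rule binomial_fact) simp
  have gen: "((2*x+2) * (2*x+1)) * F / ((x+1) * G * ((x+1) * G)) / (x+2)
     = F / (G * G) / (x+1) * (4 * x + 2) / (x + 2)" if "G > 0" "x+1>0" "x+2>0" for F G x :: real
  proof -
    have a: "(x+1) * G * ((x+1) * G) \<noteq> 0" "G*G \<noteq> 0" "x+1 \<noteq> 0" "x+2\<noteq>0" using that by auto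
    show ?thesis using a by (simp add: divide_simps) (simp add: algebra_simps)
  qed
  show ?thesis unfolding e1 e2 unfolding catalan_def e3
    using gen[of "fact m" "real m" "fact (2*m)"] by (simp add: add_ac)
qed

definition sc :: "nat \<Rightarrow> real" where "sc n = ((1/2::real) gchoose n) * (-4)^n"

lemma sc_Suc: "sc (Suc m) = - 2 * catalan m"
proof (induction m)
  case 0 then show ?case by (simp add: sc_def catalan_def)
next
  case (Suc m)
  have "sc (Suc (Suc m)) = sc (Suc m) * ((1/2 - real (Suc m)) * (-4) / real (Suc (Suc m)))"
    unfolding sc_def by (subst gch_Suc[of _ "Suc m"]) (simp add: field_simps)
  also have "\<dots> = - 2 * catalan (Suc m)" using Suc by (simp add: catalan_Suc field_simps)
  finally show ?case .
qed

definition uu :: "real fps" where "uu = Abs_fps (\<lambda>n. if n = 0 then 0 else catalan (n - 1))"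

lemma sc_fps: "Abs_fps sc = 1 - 2 * uu"
proof (rule fps_ext)
  fix n show "fps_nth (Abs_fps sc) n = fps_nth (1 - 2 * uu) n"
  proof (cases n)
    case 0 then show ?thesis by (simp add: sc_def uu_def fps_numeral_fps_const)
  next
    case (Suc m) then show ?thesis by (simp add: sc_Suc uu_def fps_numeral_fps_const)
  qed
qed

lemma sc_sq: "Abs_fps sc * Abs_fps sc = 1 - 4 * fps_X"
proof (rule fps_ext)
  fix n
  have "fps_nth (Abs_fps sc * Abs_fps sc) n = (\<Sum>i=0..n. sc i * sc (n - i))" by (simp add: fps_mult_nth)
  also have "\<dots> = (-4)^n * (\<Sum>i=0..n. ((1/2::real) gchoose i) * ((1/2) gchoose (n-i)))"
    by (simp add: sc_def sum_distrib_left field_simps power_add[symmetric])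
  also have "(\<Sum>i=0..n. ((1/2::real) gchoose i) * ((1/2) gchoose (n-i))) = fps_nth (fps_binomial (1/2) * fps_binomial (1/2)) n"
    by (simp add: fps_mult_nth)
  also have "fps_binomial (1/2) * fps_binomial (1/2) = (fps_binomial 1 :: real fps)"
    by (simp flip: fps_binomial_add_mult)
  finally show "fps_nth (Abs_fps sc * Abs_fps sc) n = fps_nth (1 - 4 * fps_X) n"
    by (cases n) (auto simp: fps_binomial_1 fps_numeral_nth fps_X_nth)
qed

lemma uu_sq: "uu * uu = uu - fps_X"
proof -
  have "(1 - 2 * uu) * (1 - 2 * uu) = 1 - 4 * fps_X" using sc_sq sc_fps by simp
  then have "4 * (uu * uu) = 4 * (uu - fps_X)" by (simp add: algebra_simps)
  then have "fps_const (1/4) * (4 * (uu * uu)) = fps_const (1/4) * (4 * (uu - fps_X))" by simp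
  then show ?thesis by (simp add: mult.assoc[symmetric] fps_numeral_fps_const fps_const_mult[symmetric] del: fps_const_mult)
qed



definition BB :: "nat \<Rightarrow> nat \<Rightarrow> real" where
  "BB n j = real ((2*n - j - 1) choose (n - 1)) - real ((2*n - j - 1) choose n)"

lemma uu_nth0: "fps_nth (uu * f) 0 = 0"
  by (simp add: fps_mult_nth uu_def)

lemma uu_pow_rec: "uu ^ Suc (Suc j) = uu ^ Suc j - fps_X * uu ^ j"
proof -
  have "uu ^ Suc (Suc j) = uu ^ j * (uu * uu)" by (simp add: algebra_simps)
  also have "\<dots> = uu ^ Suc j - fps_X * uu ^ j" by (simp add: uu_sq algebra_simps)
  finally show ?thesis .
qed

lemma BB0: "n \<ge> 1 \<Longrightarrow> BB n 0 = 0"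
proof -
  assume "n \<ge> 1"
  then obtain p where n: "n = Suc p" by (cases n) auto
  have "(2*p+1) choose p = (2*p+1) choose (2*p+1-p)" by (rule binomial_symmetric) simp
  then show ?thesis by (simp add: BB_def n)
qed

lemma BB1: "n \<ge> 1 \<Longrightarrow> BB n 1 = catalan (n - 1)"
proof -
  assume "n \<ge> 1"
  then obtain m where n: "n = Suc m" by (cases n) auto
  have "Suc m * ((2*m) choose Suc m) = (2*m - m) * ((2*m) choose m)"
    using binomial_absorption[of m "2*m"] binomial_absorb_comp[of "2*m" m] by metis
  then have "real (Suc m) * real ((2*m) choose Suc m) = real m * real ((2*m) choose m)"
    by (metis diff_add_inverse mult_2 of_nat_mult)
  then have "real ((2*m) choose Suc m) = real m * real ((2*m) choose m) / real (Suc m)"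
    by (simp add: field_simps del: of_nat_Suc)
  then show ?thesis
    by (simp add: BB_def n catalan_def field_simps del: binomial_Suc_Suc)
qed


lemma BB_rec:
  assumes "n \<ge> j + 2"
  shows "BB n (Suc (Suc j)) = BB n (Suc j) - BB (n - 1) j"
proof -
  obtain r where n: "n = j + r + 2" using assms by (intro that[of "n - j - 2"]) simp
  define N where "N = j + 2*r + 1"
  define K where "K = j + r"
  have e: "2*n - Suc (Suc j) - 1 = N" "n - 1 = Suc K" "n = Suc (Suc K)" "2*n - Suc j - 1 = Suc N"
     "2*(n-1) - j - 1 = N" "n - 1 - 1 = K"
    unfolding n N_def K_def by simp_all
  have a: "BB n (Suc (Suc j)) = real(N choose Suc K) - real(N choose Suc(Suc K))"
    unfolding BB_def by (simp only: e(1,2)) (simp only: e(3))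
  have b: "BB n (Suc j) = real(Suc N choose Suc K) - real(Suc N choose Suc(Suc K))"
    unfolding BB_def by (simp only: e(4,2)) (simp only: e(3))
  have c: "BB (n-1) j = real(N choose K) - real(N choose Suc K)"
    unfolding BB_def by (simp only: e(5,6)) (simp only: e(2))
  show ?thesis unfolding a b c by (simp only: binomial_Suc_Suc of_nat_add)
qed

lemma uu_pow_nth: "max j 1 \<le> n \<Longrightarrow> fps_nth (uu ^ j) n = BB n j"
proof -
  have "(\<forall>n. max j 1 \<le> n \<longrightarrow> fps_nth (uu ^ j) n = BB n j) \<and>
        (\<forall>n. max (Suc j) 1 \<le> n \<longrightarrow> fps_nth (uu ^ Suc j) n = BB n (Suc j))"
  proof (induction j)
    case 0
    show ?case using BB0 BB1 by (auto simp: uu_def)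
  next
    case (Suc j)
    have "fps_nth (uu ^ Suc (Suc j)) n = BB n (Suc (Suc j))" if "max (Suc (Suc j)) 1 \<le> n" for n
    proof -
      have "fps_nth (uu ^ Suc (Suc j)) n = fps_nth (uu ^ Suc j - fps_X * uu ^ j) n"
        by (simp only: uu_pow_rec)
      also have "\<dots> = fps_nth (uu ^ Suc j) n - fps_nth (uu ^ j) (n - 1)"
        using that by (simp only: fps_sub_nth fps_X_mult_nth) simp
      also have "\<dots> = BB n (Suc j) - BB (n-1) j"
      proof -
        have "fps_nth (uu ^ j) (n - 1) = BB (n-1) j" proof -
          have "max j 1 \<le> n - 1" using that by linarith
          then show ?thesis using conjunct1[OF Suc.IH] by blast
        qed
        moreover have "fps_nth (uu ^ Suc j) n = BB n (Suc j)" using conjunct2[OF Suc.IH] that by auto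
        ultimately show ?thesis by simp
      qed
      finally show ?thesis using BB_rec[of j n] that by simp
    qed
    then show ?case using Suc.IH by blast
  qed
  then show "max j 1 \<le> n \<Longrightarrow> fps_nth (uu ^ j) n = BB n j" by blast
qed

lemma final_binom:
  assumes "1 \<le> k" "k \<le> d"
  shows "real d * BB d k / real k = real ((2*d - k - 1) choose (d - 1))"
proof -
  obtain e where d: "d = Suc e" using assms by (cases d) auto
  define N where "N = 2*d - k - 1"
  have "Suc e * (N choose Suc e) = N * ((N - 1) choose e)" by (rule binomial_absorption)
  also have "\<dots> = (N - e) * (N choose e)" by (rule binomial_absorb_comp[symmetric])
  finally have "real (Suc e) * real (N choose Suc e) = real (N - e) * real (N choose e)"
    by (metis of_nat_mult)
  moreover have "real (N - e) = real d - real k" using assms unfolding N_def d by auto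
  ultimately have "real d * real (N choose d) = (real d - real k) * real (N choose e)"
    by (simp add: d)
  then have "real d * BB d k = real k * real (N choose e)"
    unfolding BB_def N_def[symmetric] by (simp add: d algebra_simps)
  then show ?thesis using assms by (simp add: N_def d field_simps)
qed

lemma deriv_sum:
  assumes "1 \<le> k"
  shows "real k * (\<Sum>g<d. real (d-g) * catalan (d-g-1) * fps_nth (uu^(k-1)) g) = real d * fps_nth (uu^k) d"
proof -
  have "fps_X * fps_deriv (uu^k) = fps_const (real k) * (uu^(k-1) * (fps_X * fps_deriv uu))"
    by (simp only: fps_deriv_power mult_ac)
  then have "fps_nth (fps_X * fps_deriv (uu^k)) d = real k * fps_nth (uu^(k-1) * (fps_X * fps_deriv uu)) d"
    by (simp only: fps_mult_left_const_nth)
  moreover have "fps_nth (fps_X * fps_deriv (uu^k)) d = real d * fps_nth (uu^k) d"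
    by (cases d) auto
  moreover have "fps_nth (uu^(k-1) * (fps_X * fps_deriv uu)) d = (\<Sum>g<d. real (d-g) * catalan (d-g-1) * fps_nth (uu^(k-1)) g)"
  proof -
    have "fps_nth (uu^(k-1) * (fps_X * fps_deriv uu)) d = (\<Sum>g=0..d. fps_nth (uu^(k-1)) g * fps_nth (fps_X * fps_deriv uu) (d - g))"
      by (simp add: fps_mult_nth)
    also have "\<dots> = (\<Sum>g<Suc d. fps_nth (uu^(k-1)) g * fps_nth (fps_X * fps_deriv uu) (d - g))"
      by (simp add: atLeast0AtMost lessThan_Suc_atMost)
    also have "\<dots> = (\<Sum>g<d. fps_nth (uu^(k-1)) g * fps_nth (fps_X * fps_deriv uu) (d - g))"
      by simp
    also have "\<dots> = (\<Sum>g<d. real (d-g) * catalan (d-g-1) * fps_nth (uu^(k-1)) g)"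
    proof (rule sum.cong)
      fix g assume "g \<in> {..<d}"
      then obtain q where q: "d - g = Suc q" by (metis lessThan_iff zero_less_diff not0_implies_Suc neq0_conv)
      show "fps_nth (uu^(k-1)) g * fps_nth (fps_X * fps_deriv uu) (d - g) = real (d-g) * catalan (d-g-1) * fps_nth (uu^(k-1)) g"
        unfolding q by (simp add: uu_def)
    qed simp
    finally show ?thesis .
  qed
  ultimately show ?thesis by simp
qed



definition nxt :: "nat set \<Rightarrow> nat \<Rightarrow> nat" where "nxt T s = (LEAST x. x \<in> T \<and> s < x)"
definition LS :: "nat \<Rightarrow> nat \<Rightarrow> nat \<Rightarrow> nat set set" where
  "LS a b j = {T. T \<subseteq> {a..b} \<and> a \<in> T \<and> b \<in> T \<and> card T = Suc j}"
definition wt :: "nat set \<Rightarrow> nat \<Rightarrow> real" where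
  "wt T b = (\<Prod>s\<in>T-{b}. catalan (nxt T s - s - 1))"

lemma finite_LS: "finite (LS a b j)"
proof -
  have "LS a b j \<subseteq> Pow {a..b}" unfolding LS_def by auto
  then show ?thesis by (rule finite_subset) simp
qed

lemma nxt_eqI: "x \<in> T \<Longrightarrow> s < x \<Longrightarrow> (\<And>y. y \<in> T \<Longrightarrow> s < y \<Longrightarrow> x \<le> y) \<Longrightarrow> nxt T s = x"
  unfolding nxt_def by (rule Least_equality) auto

lemma nxt_cong: "(\<And>x. s < x \<Longrightarrow> x \<in> A \<longleftrightarrow> x \<in> B) \<Longrightarrow> nxt A s = nxt B s"
proof -
  assume h: "\<And>x. s < x \<Longrightarrow> x \<in> A \<longleftrightarrow> x \<in> B"
  have "(\<lambda>x. x \<in> A \<and> s < x) = (\<lambda>x. x \<in> B \<and> s < x)" using h by auto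
  then show ?thesis unfolding nxt_def by simp
qed

lemma wt_insert:
  assumes T: "T \<in> LS a' b j" and aa: "a < a'"
  shows "wt (insert a T) b = catalan (a' - a - 1) * wt T b"
proof -
  have sub: "T \<subseteq> {a'..b}" and a'T: "a' \<in> T" and bT: "b \<in> T" using T unfolding LS_def by auto
  have fin: "finite T" using sub finite_subset by blast
  have aT: "a \<notin> T" using sub aa by auto
  have ab: "a \<noteq> b" using bT aT by auto
  have e: "insert a T - {b} = insert a (T - {b})" using ab by auto
  have "wt (insert a T) b = catalan (nxt (insert a T) a - a - 1) * (\<Prod>s\<in>T-{b}. catalan (nxt (insert a T) s - s - 1))"
    unfolding wt_def e using fin aT by (simp add: prod.insert)
  also have "nxt (insert a T) a = a'"
    by (rule nxt_eqI) (use a'T aa sub in auto)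
  also have "(\<Prod>s\<in>T-{b}. catalan (nxt (insert a T) s - s - 1)) = wt T b"
    unfolding wt_def
  proof (rule prod.cong)
    fix s assume "s \<in> T - {b}"
    then have "a' \<le> s" using sub by auto
    then have "nxt (insert a T) s = nxt T s" by (intro nxt_cong) (use aa in auto)
    then show "catalan (nxt (insert a T) s - s - 1) = catalan (nxt T s - s - 1)" by simp
  qed simp
  finally show ?thesis .
qed


lemma LS_split:
  assumes ab: "a < b"
  shows "(\<Sum>T\<in>LS a b (Suc j). wt T b) = (\<Sum>a'\<in>{a<..b}. \<Sum>T\<in>LS a' b j. wt (insert a T) b)"
proof -
  have "(\<Sum>a'\<in>{a<..b}. \<Sum>T\<in>LS a' b j. wt (insert a T) b) = (\<Sum>p\<in>Sigma {a<..b} (\<lambda>a'. LS a' b j). wt (insert a (snd p)) b)"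
    by (subst sum.Sigma) (auto simp: finite_LS split_def)
  also have "\<dots> = (\<Sum>T\<in>LS a b (Suc j). wt T b)"
  proof (rule sum.reindex_bij_witness[where i = "\<lambda>T. (Min (T - {a}), T - {a})" and j = "\<lambda>p. insert a (snd p)"])
    fix T assume T: "T \<in> LS a b (Suc j)"
    then show "insert a (snd (Min (T - {a}), T - {a})) = T" unfolding LS_def by auto
    have sub: "T \<subseteq> {a..b}" and aT: "a \<in> T" and bT: "b \<in> T" and c: "card T = Suc (Suc j)"
      using T unfolding LS_def by auto
    have fin: "finite (T - {a})" using sub finite_subset by blast
    have ne: "T - {a} \<noteq> {}" using bT ab by auto
    have mi: "Min (T - {a}) \<in> T - {a}" using Min_in[OF fin ne] .
    have le: "\<And>x. x \<in> T - {a} \<Longrightarrow> Min (T - {a}) \<le> x" using Min_le[OF fin] by blast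
    have "card (T - {a}) = Suc j" using c aT by simp
    then show "(Min (T - {a}), T - {a}) \<in> Sigma {a<..b} (\<lambda>a'. LS a' b j)"
      using mi le sub bT ab unfolding LS_def by fastforce
  next
    fix p assume p: "p \<in> Sigma {a<..b} (\<lambda>a'. LS a' b j)"
    obtain a' T where pe: "p = (a', T)" by (cases p)
    have a': "a < a'" "a' \<le> b" and T: "T \<in> LS a' b j" using p pe by auto
    have sub: "T \<subseteq> {a'..b}" and a'T: "a' \<in> T" and bT: "b \<in> T" and c: "card T = Suc j"
      using T unfolding LS_def by auto
    have fin: "finite T" using sub finite_subset by blast
    have aT: "a \<notin> T" using sub a' by auto
    have m: "Min T = a'" using a'T sub fin by (intro Min_eqI) auto
    show "(Min (insert a (snd p) - {a}), insert a (snd p) - {a}) = p"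
      using aT m pe by simp
    show "insert a (snd p) \<in> LS a b (Suc j)"
      using pe sub a'T bT c fin aT a' unfolding LS_def by auto
  qed simp
  finally show ?thesis by simp
qed


lemma LS0: "LS a b 0 = (if a = b then {{a}} else {})"
proof -
  have "T = {a} \<and> a = b" if "T \<in> LS a b 0" for T
  proof -
    from that have "card T = 1" "a \<in> T" "b \<in> T" unfolding LS_def by auto
    then obtain x where "T = {x}" using card_1_singletonE by blast
    then show ?thesis using \<open>a \<in> T\<close> \<open>b \<in> T\<close> by auto
  qed
  moreover have "{a} \<in> LS a a 0" unfolding LS_def by auto
  ultimately show ?thesis by auto
qed
lemma LS_empty: "LS a a (Suc j) = {}"
proof -
  have "T \<notin> LS a a (Suc j)" for T
  proof
    assume "T \<in> LS a a (Suc j)"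
    then have "T \<subseteq> {a}" "card T = Suc (Suc j)" unfolding LS_def by auto
    then have "card T \<le> card {a}" by (intro card_mono) auto
    with \<open>card T = Suc (Suc j)\<close> show False by simp
  qed
  then show ?thesis by blast
qed

lemma uu_nth: "fps_nth uu n = (if n = 0 then 0 else catalan (n - 1))"
  by (simp add: uu_def)

lemma lin: "a \<le> b \<Longrightarrow> (\<Sum>T\<in>LS a b j. wt T b) = fps_nth (uu ^ j) (b - a)"
proof (induction j arbitrary: a)
  case 0
  show ?case
  proof (cases "a = b")
    case True
    then show ?thesis by (simp add: LS0 wt_def)
  next
    case False
    then show ?thesis using 0 by (simp add: LS0)
  qed
next
  case (Suc j)
  show ?case
  proof (cases "a = b")
    case True
    have "LS a b (Suc j) = {}" using True LS_empty by simp
    then show ?thesis using True by (simp add: uu_nth0 uu_nth)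
  next
    case False
    then have ab: "a < b" using Suc.prems by simp
    have "(\<Sum>T\<in>LS a b (Suc j). wt T b) = (\<Sum>a'\<in>{a<..b}. \<Sum>T\<in>LS a' b j. wt (insert a T) b)"
      by (rule LS_split[OF ab])
    also have "\<dots> = (\<Sum>a'\<in>{a<..b}. catalan (a' - a - 1) * fps_nth (uu ^ j) (b - a'))"
    proof (rule sum.cong)
      fix a' assume a': "a' \<in> {a<..b}"
      have "(\<Sum>T\<in>LS a' b j. wt (insert a T) b) = (\<Sum>T\<in>LS a' b j. catalan (a' - a - 1) * wt T b)"
        by (rule sum.cong) (use a' wt_insert in auto)
      also have "\<dots> = catalan (a' - a - 1) * fps_nth (uu ^ j) (b - a')"
        using Suc.IH[of a'] a' by (simp add: sum_distrib_left[symmetric])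
      finally show "(\<Sum>T\<in>LS a' b j. wt (insert a T) b) = catalan (a' - a - 1) * fps_nth (uu ^ j) (b - a')" .
    qed simp
    also have "\<dots> = (\<Sum>i\<in>{1..b-a}. fps_nth uu i * fps_nth (uu ^ j) (b - a - i))"
    proof (rule sum.reindex_bij_witness[where j = "\<lambda>a'. a' - a" and i = "\<lambda>i. i + a"])
      fix a' assume "a' \<in> {a<..b}"
      then have h: "a < a'" "a' \<le> b" by auto
      show "a' - a + a = a'" using h by simp
      show "a' - a \<in> {1..b-a}" using h by (simp add: le_diff_conv)
      have "b - a - (a' - a) = b - a'" using h by simp
      moreover have "fps_nth uu (a' - a) = catalan (a' - a - 1)" using h by (simp add: uu_nth)
      ultimately show "fps_nth uu (a' - a) * fps_nth (uu ^ j) (b - a - (a' - a)) = catalan (a' - a - 1) * fps_nth (uu ^ j) (b - a')"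
        by simp
    next
      fix i assume "i \<in> {1..b-a}"
      then have h: "1 \<le> i" "i \<le> b - a" by auto
      show "i + a - a = i" by simp
      show "i + a \<in> {a<..b}" using h by simp
    qed
    also have "\<dots> = (\<Sum>i=0..b-a. fps_nth uu i * fps_nth (uu ^ j) (b - a - i))"
      by (subst sum.atLeast_Suc_atMost[of 0]) (auto simp: uu_nth)
    also have "\<dots> = fps_nth (uu ^ Suc j) (b - a)" by (simp add: fps_mult_nth)
    finally show ?thesis .
  qed
qed



lemma cyc_gap_lt:
  assumes S: "S \<subseteq> {0..<d}" and s: "s \<in> S" and sm: "s < Max S"
  shows "cyc_gap d S s = nxt S s - s"
proof -
  have fin: "finite S" using S finite_subset by blast
  have MS: "Max S \<in> S" using fin s Max_in by blast
  have ex: "\<exists>x. x \<in> S \<and> s < x" using MS sm by blast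
  define x where "x = nxt S s"
  have xS: "x \<in> S \<and> s < x" unfolding x_def nxt_def by (rule LeastI_ex[OF ex])
  have xle: "\<And>y. y \<in> S \<Longrightarrow> s < y \<Longrightarrow> x \<le> y" unfolding x_def nxt_def by (rule Least_le) simp
  have xd: "x < d" using xS S by auto
  show ?thesis unfolding cyc_gap_def x_def[symmetric]
  proof (rule Least_equality)
    show "0 < x - s \<and> (s + (x - s)) mod d \<in> S" using xS xd by simp
  next
    fix y assume y: "0 < y \<and> (s + y) mod d \<in> S"
    show "x - s \<le> y"
    proof (rule ccontr)
      assume "\<not> x - s \<le> y"
      then have "s + y < x" by simp
      then have "(s + y) mod d = s + y" using xd by simp
      then have "s + y \<in> S" using y by simp
      then have "x \<le> s + y" using xle y by simp
      with \<open>s + y < x\<close> show False by simp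
    qed
  qed
qed

lemma cyc_gap_max:
  assumes S: "S \<subseteq> {0..<d}" and ne: "S \<noteq> {}"
  shows "cyc_gap d S (Max S) = d - Max S + Min S"
proof -
  have fin: "finite S" using S finite_subset by blast
  define m where "m = Max S"
  define t where "t = Min S"
  have mS: "m \<in> S" and tS: "t \<in> S" using fin ne unfolding m_def t_def by auto
  have md: "m < d" using mS S by auto
  have tm: "t \<le> m" using fin ne unfolding m_def t_def by simp
  have gm: "\<And>x. x \<in> S \<Longrightarrow> x \<le> m" using fin unfolding m_def by simp
  have lt: "\<And>x. x \<in> S \<Longrightarrow> t \<le> x" using fin unfolding t_def by simp
  show ?thesis unfolding cyc_gap_def m_def[symmetric] t_def[symmetric]
  proof (rule Least_equality)
    have "m + (d - m + t) = d + t" using md by simp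
    then have "(m + (d - m + t)) mod d = t" using tm md by simp
    then show "0 < d - m + t \<and> (m + (d - m + t)) mod d \<in> S" using md tS by simp
  next
    fix y assume y: "0 < y \<and> (m + y) mod d \<in> S"
    show "d - m + t \<le> y"
    proof (rule ccontr)
      assume "\<not> d - m + t \<le> y"
      then have yl: "y < d - m + t" by simp
      show False
      proof (cases "m + y < d")
        case True
        then have "m + y \<in> S" using y by simp
        then show False using gm y by fastforce
      next
        case False
        then have "(m + y) mod d = m + y - d" using yl md tm
          by (simp add: mod_if)
        then have "m + y - d \<in> S" using y by simp
        then have "t \<le> m + y - d" using lt by blast
        then show False using yl False md by arith
      qed
    qed
  qed
qed

lemma swap_sum: "(\<Sum>m<d. \<Sum>g\<le>m. f g) = (\<Sum>g<d. real (d - g) * (f g :: real))"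
proof (induction d)
  case 0 then show ?case by simp
next
  case (Suc d)
  have "(\<Sum>g<Suc d. real (Suc d - g) * f g) = (\<Sum>g<Suc d. real (d - g) * f g + f g)"
    by (rule sum.cong) (auto simp: Suc_diff_le algebra_simps)
  also have "\<dots> = (\<Sum>g<Suc d. real (d - g) * f g) + (\<Sum>g<Suc d. f g)" by (simp add: sum.distrib)
  also have "(\<Sum>g<Suc d. real (d - g) * f g) = (\<Sum>g<d. real (d - g) * f g)" by simp
  finally have A: "(\<Sum>g<Suc d. real (Suc d - g) * f g) = (\<Sum>g<d. real (d - g) * f g) + (\<Sum>g<Suc d. f g)" .
  have B: "(\<Sum>m<Suc d. \<Sum>g\<le>m. f g) = (\<Sum>m<d. \<Sum>g\<le>m. f g) + (\<Sum>g\<le>d. f g)" by (simp only: sum.lessThan_Suc)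
  have C: "(\<Sum>g<Suc d. f g) = (\<Sum>g\<le>d. f g)" by (simp only: lessThan_Suc_atMost)
  show ?case unfolding A B C Suc.IH ..
qed



lemma term_eq:
  assumes S: "S \<in> cyclic_compositions d k" and k: "1 \<le> k"
  shows "(\<Prod>a\<leftarrow>part_sizes d S. catalan (a - 1)) = catalan (d - Max S + Min S - 1) * wt S (Max S)"
proof -
  have sub: "S \<subseteq> {0..<d}" and c: "card S = k" using S unfolding cyclic_compositions_def by auto
  have fin: "finite S" using sub finite_subset by blast
  have ne: "S \<noteq> {}" using c k by auto
  have MS: "Max S \<in> S" using fin ne by simp
  have "(\<Prod>a\<leftarrow>part_sizes d S. catalan (a - 1)) = prod_list (map (\<lambda>s. catalan (cyc_gap d S s - 1)) (sorted_list_of_set S))"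
    unfolding part_sizes_def by (simp add: comp_def)
  also have "\<dots> = (\<Prod>s\<in>S. catalan (cyc_gap d S s - 1))"
    using prod.distinct_set_conv_list[of "sorted_list_of_set S" "\<lambda>s. catalan (cyc_gap d S s - 1)"] fin by simp
  also have "\<dots> = catalan (cyc_gap d S (Max S) - 1) * (\<Prod>s\<in>S - {Max S}. catalan (cyc_gap d S s - 1))"
    by (rule prod.remove[OF fin MS])
  also have "cyc_gap d S (Max S) = d - Max S + Min S" by (rule cyc_gap_max[OF sub ne])
  also have "(\<Prod>s\<in>S - {Max S}. catalan (cyc_gap d S s - 1)) = wt S (Max S)"
    unfolding wt_def
  proof (rule prod.cong)
    fix s assume s: "s \<in> S - {Max S}"
    then have "s < Max S" using fin by (simp add: order.not_eq_order_implies_strict)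
    then show "catalan (cyc_gap d S s - 1) = catalan (nxt S s - s - 1)"
      using cyc_gap_lt[OF sub _ ] s by simp
  qed simp
  finally show ?thesis .
qed

lemma fiber:
  assumes "m < d" "t \<le> m" "1 \<le> k"
  shows "{S \<in> cyclic_compositions d k. (Max S, Min S) = (m, t)} = LS t m (k - 1)"
proof
  show "{S \<in> cyclic_compositions d k. (Max S, Min S) = (m, t)} \<subseteq> LS t m (k - 1)"
  proof
    fix S assume "S \<in> {S \<in> cyclic_compositions d k. (Max S, Min S) = (m, t)}"
    then have sub: "S \<subseteq> {0..<d}" and c: "card S = k" and M: "Max S = m" and Mi: "Min S = t"
      unfolding cyclic_compositions_def by auto
    have fin: "finite S" using sub finite_subset by blast
    have ne: "S \<noteq> {}" using c assms by auto
    have "m \<in> S" using Max_in[OF fin ne] M by simp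
    moreover have "t \<in> S" using Min_in[OF fin ne] Mi by simp
    moreover have "S \<subseteq> {t..m}" using fin ne M Mi by auto
    ultimately show "S \<in> LS t m (k - 1)" unfolding LS_def using c assms by auto
  qed
next
  show "LS t m (k - 1) \<subseteq> {S \<in> cyclic_compositions d k. (Max S, Min S) = (m, t)}"
  proof
    fix T assume "T \<in> LS t m (k - 1)"
    then have sub: "T \<subseteq> {t..m}" and tT: "t \<in> T" and mT: "m \<in> T" and c: "card T = Suc (k - 1)"
      unfolding LS_def by auto
    have fin: "finite T" using sub finite_subset by blast
    have "Max T = m" using fin sub mT by (intro Max_eqI) auto
    moreover have "Min T = t" using fin sub tT by (intro Min_eqI) auto
    moreover have "T \<subseteq> {0..<d}" using sub assms by auto
    ultimately show "T \<in> {S \<in> cyclic_compositions d k. (Max S, Min S) = (m, t)}"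
      unfolding cyclic_compositions_def using c assms by auto
  qed
qed

theorem lemma3p4:
  fixes d k :: nat
  assumes "1 \<le> k" and "k \<le> d"
  shows "(\<Sum>S\<in>cyclic_compositions d k. \<Prod>a\<leftarrow>part_sizes d S. catalan (a - 1))
         = real ((2*d - k - 1) choose (d - 1))"
proof -
  define c where "c = (\<lambda>g. fps_nth (uu ^ (k - 1)) g)"
  define P where "P = Sigma {..<d} (\<lambda>m. {..m})"
  have finC: "finite (cyclic_compositions d k)"
  proof -
    have "cyclic_compositions d k \<subseteq> Pow {0..<d}" unfolding cyclic_compositions_def by auto
    then show ?thesis by (rule finite_subset) simp
  qed
  have img: "(\<lambda>S. (Max S, Min S)) ` cyclic_compositions d k \<subseteq> P"
  proof
    fix p assume "p \<in> (\<lambda>S. (Max S, Min S)) ` cyclic_compositions d k"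
    then obtain S where S: "S \<in> cyclic_compositions d k" and p: "p = (Max S, Min S)" by blast
    have sub: "S \<subseteq> {0..<d}" and cS: "card S = k" using S unfolding cyclic_compositions_def by auto
    have fin: "finite S" using sub finite_subset by blast
    have ne: "S \<noteq> {}" using cS assms by auto
    have "Max S \<in> S" using fin ne by simp
    then have "Max S < d" using sub by auto
    moreover have "Min S \<le> Max S" using fin ne by simp
    ultimately show "p \<in> P" unfolding P_def p by simp
  qed
  have "(\<Sum>S\<in>cyclic_compositions d k. \<Prod>a\<leftarrow>part_sizes d S. catalan (a - 1))
      = (\<Sum>S\<in>cyclic_compositions d k. catalan (d - Max S + Min S - 1) * wt S (Max S))"
    by (rule sum.cong) (use term_eq assms in auto)
  also have "\<dots> = (\<Sum>p\<in>P. \<Sum>S\<in>{S \<in> cyclic_compositions d k. (Max S, Min S) = p}. catalan (d - Max S + Min S - 1) * wt S (Max S))"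
    by (rule sum.group[symmetric, OF finC _ img]) (simp add: P_def)
  also have "\<dots> = (\<Sum>p\<in>P. catalan (d - (fst p - snd p) - 1) * c (fst p - snd p))"
  proof (rule sum.cong)
    fix p assume "p \<in> P"
    then obtain m t where p: "p = (m, t)" and mt: "m < d" "t \<le> m" unfolding P_def by auto
    have "(\<Sum>S\<in>{S \<in> cyclic_compositions d k. (Max S, Min S) = p}. catalan (d - Max S + Min S - 1) * wt S (Max S))
        = (\<Sum>S\<in>LS t m (k - 1). catalan (d - m + t - 1) * wt S m)"
      unfolding p fiber[OF mt assms(1)]
    proof (rule sum.cong)
      fix S assume "S \<in> LS t m (k - 1)"
      then have "S \<in> {S \<in> cyclic_compositions d k. (Max S, Min S) = (m, t)}"
        using fiber[OF mt assms(1)] by simp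
      then show "catalan (d - Max S + Min S - 1) * wt S (Max S) = catalan (d - m + t - 1) * wt S m" by simp
    qed simp
    also have "\<dots> = catalan (d - m + t - 1) * c (m - t)"
      using lin[OF mt(2), of "k - 1"] unfolding c_def by (simp add: sum_distrib_left[symmetric])
    also have "d - m + t = d - (m - t)" using mt by simp
    finally show "(\<Sum>S\<in>{S \<in> cyclic_compositions d k. (Max S, Min S) = p}. catalan (d - Max S + Min S - 1) * wt S (Max S))
        = catalan (d - (fst p - snd p) - 1) * c (fst p - snd p)" unfolding p by simp
  qed simp
  also have "\<dots> = (\<Sum>m<d. \<Sum>t\<le>m. catalan (d - (m - t) - 1) * c (m - t))"
    unfolding P_def by (subst sum.Sigma) (auto simp: split_def)
  also have "\<dots> = (\<Sum>m<d. \<Sum>g\<le>m. catalan (d - g - 1) * c g)"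
  proof (rule sum.cong)
    fix m assume "m \<in> {..<d}"
    show "(\<Sum>t\<le>m. catalan (d - (m - t) - 1) * c (m - t)) = (\<Sum>g\<le>m. catalan (d - g - 1) * c g)"
      by (rule sum.reindex_bij_witness[where i = "\<lambda>g. m - g" and j = "\<lambda>g. m - g"]) auto
  qed simp
  also have "\<dots> = (\<Sum>g<d. real (d - g) * (catalan (d - g - 1) * c g))"
    by (rule swap_sum)
  also have "\<dots> = real d * fps_nth (uu ^ k) d / real k"
    using deriv_sum[OF assms(1), of d] assms(1) unfolding c_def
    by (simp add: field_simps mult.assoc)
  also have "fps_nth (uu ^ k) d = BB d k" using uu_pow_nth[of k d] assms by simp
  also have "real d * BB d k / real k = real ((2*d - k - 1) choose (d - 1))"
    by (rule final_binom[OF assms])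
  finally show ?thesis .
qed

end
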